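(* In the ARRU model described in the context, assume $m_1\neq m_2$ and condition (E). Then for every $j>0$, $$\sup_{n\ge1}E\Big[\Big(\frac{n}{Y_n}\Big)^j\Big]<\infty.$$
   Context: ARRU model. Fix $0<a\le b<\infty$, a measurable space $S$, probability measures $\mu_1,\mu_2$ on $S$ and a measurable $u:S\to[a,b]$. On a probability space let $(\xi_{1,n})_{n\ge1}$ be i.i.d. with law $\mu_1$, $(\xi_{2,n})_{n\ge1}$ i.i.d. with law $\mu_2$, and $(U_n)_{n\ge1}$ i.i.d. uniform on $(0,1)$, the three sequences mutually independent. Put $D_{j,n}=u(\xi_{j,n})$ and $m_j=\int u\,d\mu_j$ ($j=1,2$). Fix $y_{1,0},y_{2,0}>0$, $y_0=y_{1,0}+y_{2,0}$, and set $Y_{1,0}=y_{1,0}$, $Y_{2,0}=y_{2,0}$. Let $\mathcal F_0$ be trivial and $\mathcal F_n=\sigma\big(X_i,\ X_i\xi_{1,i}+(1-X_i)\xi_{2,i}:\ i\le n\big)$. Thresholds $\hat\rho_{1,n},\hat\rho_{2,n}$ ($n\ge0$) are $\mathcal F_n$-measurable random variables with values in $(0,1)$ and $\hat\rho_{1,n}\ge\hat\rho_{2,n}$ a.s. Recursively for $n\ge0$: $Y_n=Y_{1,n}+Y_{2,n}$, $Z_n=Y_{1,n}/Y_n$, $W_{1,n}=\mathbf 1\{Z_n\le\hat\rho_{1,n}\}$, $W_{2,n}=\mathbf 1\{Z_n\ge\hat\rho_{2,n}\}$, $X_{n+1}=\mathbf 1\{U_{n+1}<Z_n\}$, $Y_{1,n+1}=Y_{1,n}+X_{n+1}D_{1,n+1}W_{1,n}$,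 $Y_{2,n+1}=Y_{2,n}+(1-X_{n+1})D_{2,n+1}W_{2,n}$. Fix constants $0<\rho_2\le\rho_1<1$. Condition (E): for each $j\in\{1,2\}$ and each $\varepsilon>0$ there is $c_1\in(0,\infty)$ such that $P(|\hat\rho_{j,n}-\rho_j|>\varepsilon)\le c_1\exp(-n\varepsilon^2)$ for all sufficiently large $n$. *)

theory Defs
  imports "HOL-Probability.Probability"
begin

text \<open>Parameters: utility u, the sequences xi1 xi2 (values in S), U (uniforms),
  thresholds r1 r2 (estimates rho-hat), initial compositions y10 y20.
  Indices n >= 1 of xi1, xi2, U are used as in the paper; index 0 is unused.
  arru_Y ... n w = (Y_{1,n}(w), Y_{2,n}(w)).\<close>

fun arru_Y :: "('s \<Rightarrow> real) \<Rightarrow> (nat \<Rightarrow> 'w \<Rightarrow> 's) \<Rightarrow> (nat \<Rightarrow> 'w \<Rightarrow> 's) \<Rightarrow> (nat \<Rightarrow> 'w \<Rightarrow> real)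
    \<Rightarrow> (nat \<Rightarrow> 'w \<Rightarrow> real) \<Rightarrow> (nat \<Rightarrow> 'w \<Rightarrow> real) \<Rightarrow> real \<Rightarrow> real \<Rightarrow> nat \<Rightarrow> 'w \<Rightarrow> real \<times> real"
where
  "arru_Y u xi1 xi2 U r1 r2 y10 y20 0 w = (y10, y20)"
| "arru_Y u xi1 xi2 U r1 r2 y10 y20 (Suc n) w =
     (let (y1, y2) = arru_Y u xi1 xi2 U r1 r2 y10 y20 n w;
          z = y1 / (y1 + y2);
          x = (if U (Suc n) w < z then 1 else 0 :: real);
          w1 = (if z \<le> r1 n w then 1 else 0 :: real);
          w2 = (if z \<ge> r2 n w then 1 else 0 :: real)
      in (y1 + x * u (xi1 (Suc n) w) * w1, y2 + (1 - x) * u (xi2 (Suc n) w) * w2))"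

definition arru_Ytot where
  "arru_Ytot u xi1 xi2 U r1 r2 y10 y20 n w =
     fst (arru_Y u xi1 xi2 U r1 r2 y10 y20 n w) + snd (arru_Y u xi1 xi2 U r1 r2 y10 y20 n w)"

definition arru_Z where
  "arru_Z u xi1 xi2 U r1 r2 y10 y20 n w =
     fst (arru_Y u xi1 xi2 U r1 r2 y10 y20 n w) / arru_Ytot u xi1 xi2 U r1 r2 y10 y20 n w"

definition arru_X :: "('s \<Rightarrow> real) \<Rightarrow> (nat \<Rightarrow> 'w \<Rightarrow> 's) \<Rightarrow> (nat \<Rightarrow> 'w \<Rightarrow> 's) \<Rightarrow> (nat \<Rightarrow> 'w \<Rightarrow> real)
    \<Rightarrow> (nat \<Rightarrow> 'w \<Rightarrow> real) \<Rightarrow> (nat \<Rightarrow> 'w \<Rightarrow> real) \<Rightarrow> real \<Rightarrow> real \<Rightarrow> nat \<Rightarrow> 'w \<Rightarrow> real" where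
  "arru_X u xi1 xi2 U r1 r2 y10 y20 n w =
     (if n = 0 then 0 else if U n w < arru_Z u xi1 xi2 U r1 r2 y10 y20 (n - 1) w then 1 else 0)"

text \<open>Observed draw X_i xi_{1,i} + (1 - X_i) xi_{2,i}.\<close>
definition arru_obs where
  "arru_obs u xi1 xi2 U r1 r2 y10 y20 n w =
     (if arru_X u xi1 xi2 U r1 r2 y10 y20 n w = 1 then xi1 n w else xi2 n w)"

definition arru_F :: "'w measure \<Rightarrow> 's measure \<Rightarrow> ('s \<Rightarrow> real) \<Rightarrow> (nat \<Rightarrow> 'w \<Rightarrow> 's) \<Rightarrow> (nat \<Rightarrow> 'w \<Rightarrow> 's)
    \<Rightarrow> (nat \<Rightarrow> 'w \<Rightarrow> real) \<Rightarrow> (nat \<Rightarrow> 'w \<Rightarrow> real) \<Rightarrow> (nat \<Rightarrow> 'w \<Rightarrow> real) \<Rightarrow> real \<Rightarrow> real \<Rightarrow> nat \<Rightarrow> 'w measure" where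
  "arru_F M S u xi1 xi2 U r1 r2 y10 y20 n =
     sigma (space M)
       (\<Union>i\<in>{1..n}.
          {arru_X u xi1 xi2 U r1 r2 y10 y20 i -` A \<inter> space M | A. A \<in> sets (borel :: real measure)}
        \<union> {arru_obs u xi1 xi2 U r1 r2 y10 y20 i -` A \<inter> space M | A. A \<in> sets S})"

end

theory Submission
  imports Defs "HOL-Probability.Probability" "HOL-Real_Asymp.Real_Asymp"
begin


lemma (in prob_space) indep_set_mono:
  assumes "indep_set A B" "A' \<subseteq> A" "B' \<subseteq> B"
  shows "indep_set A' B'"
  using assms unfolding indep_set_def
  by (rule_tac indep_sets_mono_sets) (auto split: bool.split)

lemma measure_unif_lessThan:
  fixes z :: real assumes "0 \<le> z" "z \<le> 1"
  shows "measure (uniform_measure lborel {0<..<1::real}) {..<z} = z"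
proof -
  have "{0<..<1::real} \<inter> {..<z} = {0<..<z}" using assms by auto
  then show ?thesis using assms by (simp)
qed


lemma (in prob_space) uniform_step:
  fixes Z A1 A2 U :: "'a \<Rightarrow> real" and F :: "'a measure" and B :: real
  assumes sub: "subalgebra M F"
  and Zm: "Z \<in> borel_measurable F" and A1m: "A1 \<in> borel_measurable F" and A2m: "A2 \<in> borel_measurable F"
  and Um: "U \<in> borel_measurable M"
  and Ud: "distr M lborel U = uniform_measure lborel {0<..<1::real}"
  and ind: "indep_set (sets F) (sigma_sets (space M) {U -` A \<inter> space M | A. A \<in> sets borel})"
  and Zr: "\<forall>w\<in>space M. 0 \<le> Z w \<and> Z w \<le> 1"
  and bnd: "\<forall>w\<in>space M. \<bar>A1 w\<bar> \<le> B \<and> \<bar>A2 w\<bar> \<le> B"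
  shows "(\<integral>w. (if U w < Z w then A1 w else A2 w) \<partial>M) = (\<integral>w. Z w * A1 w + (1 - Z w) * A2 w \<partial>M)"
proof -
  define V where "V = (\<lambda>w. (Z w, A1 w, A2 w))"
  have VF: "V \<in> borel_measurable F" unfolding V_def using Zm A1m A2m by measurable
  have VM: "V \<in> borel_measurable M" using measurable_from_subalg[OF sub VF] .
  have UM: "U \<in> measurable M lborel" using Um by simp
  have sF: "space F = space M" "sets F \<subseteq> sets M" using sub unfolding subalgebra_def by auto
  have "sigma_sets (space M) {V -` A \<inter> space M |A. A \<in> sets borel} \<subseteq> sets F"
  proof (rule sigma_algebra.sigma_sets_subset)
    show "sigma_algebra (space M) (sets F)" using sets.sigma_algebra_axioms[of F] sF by simp
    show "{V -` A \<inter> space M |A. A \<in> sets borel} \<subseteq> sets F"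
      using VF sF(1) by (auto simp: measurable_def)
  qed
  then have iv: "indep_set (sigma_sets (space M) {V -` A \<inter> space M |A. A \<in> sets borel})
      (sigma_sets (space M) {U -` A \<inter> space M | A. A \<in> sets borel})"
    by (auto intro!: indep_set_mono[OF ind])
  let ?PV = "distr M borel V" and ?PU = "distr M lborel U"
  interpret PV: prob_space ?PV by (rule prob_space_distr[OF VM])
  interpret PU: prob_space ?PU by (rule prob_space_distr[OF UM])
  interpret PP: pair_prob_space ?PV ?PU ..
  have XY: "(\<lambda>x. (V x, U x)) \<in> measurable M (borel \<Otimes>\<^sub>M lborel)"
    using VM UM by (rule measurable_Pair)
  have joint: "?PV \<Otimes>\<^sub>M ?PU = distr M (borel \<Otimes>\<^sub>M lborel) (\<lambda>x. (V x, U x))"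
  proof (rule pair_measure_eqI)
    show "sigma_finite_measure ?PV" ..
    show "sigma_finite_measure ?PU" ..
    fix A B assume A: "A \<in> sets ?PV" and B: "B \<in> sets ?PU"
    have "emeasure (distr M (borel \<Otimes>\<^sub>M lborel) (\<lambda>x. (V x, U x))) (A \<times> B)
        = emeasure M ((\<lambda>x. (V x, U x)) -` (A \<times> B) \<inter> space M)"
      using A B by (intro emeasure_distr[OF XY]) auto
    also have "(\<lambda>x. (V x, U x)) -` (A \<times> B) \<inter> space M = (V -` A \<inter> space M) \<inter> (U -` B \<inter> space M)" by auto
    also have "emeasure M \<dots> = emeasure M (V -` A \<inter> space M) * emeasure M (U -` B \<inter> space M)"
    proof -
      have "V -` A \<inter> space M \<in> sigma_sets (space M) {V -` A \<inter> space M |A. A \<in> sets borel}"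
        using A by (intro sigma_sets.Basic) auto
      moreover have "U -` B \<inter> space M \<in> sigma_sets (space M) {U -` A \<inter> space M |A. A \<in> sets borel}"
        using B by (intro sigma_sets.Basic) auto
      ultimately show ?thesis using indep_setD[OF iv]
        by (simp add: emeasure_eq_measure measure_nonneg ennreal_mult)
    qed
    also have "\<dots> = emeasure ?PV A * emeasure ?PU B"
      using VM UM A B by (simp add: emeasure_distr)
    finally show "emeasure ?PV A * emeasure ?PU B = emeasure (distr M (borel \<Otimes>\<^sub>M lborel) (\<lambda>x. (V x, U x))) (A \<times> B)" by simp
  qed simp
  define cl where "cl = (\<lambda>x::real. max (-B) (min B x))"
  define q where "q = (\<lambda>(v::real\<times>real\<times>real, u::real). if u < fst v then cl (fst (snd v)) else cl (snd (snd v)))"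
  have qm: "q \<in> borel_measurable (borel \<Otimes>\<^sub>M lborel)"
  proof -
    have s: "sets (borel \<Otimes>\<^sub>M lborel) = sets (borel :: ((real\<times>real\<times>real)\<times>real) measure)"
      by (metis borel_prod sets_lborel sets_pair_measure_cong)
    have [measurable]: "(\<lambda>x::((real\<times>real\<times>real)\<times>real). fst (fst x)) \<in> borel_measurable borel"
      "(\<lambda>x::((real\<times>real\<times>real)\<times>real). snd x) \<in> borel_measurable borel"
      "(\<lambda>x::((real\<times>real\<times>real)\<times>real). fst (snd (fst x))) \<in> borel_measurable borel"
      "(\<lambda>x::((real\<times>real\<times>real)\<times>real). snd (snd (fst x))) \<in> borel_measurable borel"
      by (auto intro!: borel_measurable_continuous_onI continuous_intros)
    show ?thesis unfolding measurable_cong_sets[OF s refl] q_def cl_def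
      by (simp add: case_prod_beta') measurable
  qed
  have qb: "\<And>x. \<bar>q x\<bar> \<le> \<bar>B\<bar>" unfolding q_def cl_def by (auto split: prod.split)
  have qint: "integrable (?PV \<Otimes>\<^sub>M ?PU) q"
    by (rule PP.P.integrable_const_bound[where B="\<bar>B\<bar>"]) (use qb qm in auto)
  have eq1: "(\<integral>w. (if U w < Z w then A1 w else A2 w) \<partial>M) = (\<integral>w. q (V w, U w) \<partial>M)"
    by (intro Bochner_Integration.integral_cong refl) (use bnd in \<open>auto simp: q_def V_def cl_def\<close>)
  also have "\<dots> = integral\<^sup>L (distr M (borel \<Otimes>\<^sub>M lborel) (\<lambda>x. (V x, U x))) q"
    by (rule integral_distr[symmetric]) (use VM UM qm in auto)
  also have "\<dots> = integral\<^sup>L (?PV \<Otimes>\<^sub>M ?PU) q" using joint by simp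
  also have "\<dots> = (\<integral>v. (\<integral>u. q (v, u) \<partial>?PU) \<partial>?PV)"
    by (rule PP.integral_fst'[OF qint, symmetric])
  also have "\<dots> = (\<integral>w. (\<integral>u. q (V w, u) \<partial>?PU) \<partial>M)"
  proof (rule integral_distr[OF VM])
    show "(\<lambda>v. \<integral>u. q (v, u) \<partial>?PU) \<in> borel_measurable borel"
    proof -
      have "sets (borel \<Otimes>\<^sub>M ?PU) = sets (borel \<Otimes>\<^sub>M lborel)"
        by (rule sets_pair_measure_cong) auto
      have e: "(\<lambda>(v, u). q (v, u)) = q" by auto
      have "(\<lambda>(v, u). q (v, u)) \<in> borel_measurable (borel \<Otimes>\<^sub>M ?PU)"
        unfolding e measurable_cong_sets[OF \<open>sets (borel \<Otimes>\<^sub>M ?PU) = sets (borel \<Otimes>\<^sub>M lborel)\<close> refl] by (rule qm)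
      then show ?thesis using PU.borel_measurable_lebesgue_integral[of "\<lambda>v u. q (v, u)" borel] by blast
    qed
  qed
  also have "\<dots> = (\<integral>w. Z w * A1 w + (1 - Z w) * A2 w \<partial>M)"
  proof (intro Bochner_Integration.integral_cong refl)
    fix w assume w: "w \<in> space M"
    have "(\<lambda>u. q (V w, u)) = (\<lambda>u. A2 w + (A1 w - A2 w) * indicator {..<Z w} u)"
      using bnd w by (auto simp: q_def V_def cl_def fun_eq_iff indicator_def)
    then have "(\<integral>u. q (V w, u) \<partial>?PU) = A2 w + (A1 w - A2 w) * measure ?PU {..<Z w}"

    proof -
      assume e: "(\<lambda>u. q (V w, u)) = (\<lambda>u. A2 w + (A1 w - A2 w) * indicator {..<Z w} u)"
      have i1: "integrable ?PU (\<lambda>u. (A1 w - A2 w) * indicator {..<Z w} u :: real)"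
        by (intro integrable_mult_right integrable_real_indicator) (auto simp: PU.emeasure_finite less_top[symmetric])
      show ?thesis unfolding e
        by (subst Bochner_Integration.integral_add[OF PU.integrable_const i1]) (use PU.prob_space in simp)
    qed
    also have "measure ?PU {..<Z w} = Z w" using Ud Zr w measure_unif_lessThan[of "Z w"] by simp
    finally show "(\<integral>u. q (V w, u) \<partial>?PU) = Z w * A1 w + (1 - Z w) * A2 w"
      by (simp add: algebra_simps)
  qed
  finally show ?thesis .
qed


lemma measurable_sets_mono:
  assumes "space A = space B" "sets A \<subseteq> sets B" "f \<in> measurable A N"
  shows "f \<in> measurable B N"
  using assms unfolding measurable_def by auto

lemma Int_stable_vimage: "Int_stable {f -` A \<inter> \<Omega> | A. A \<in> sets N}"
proof (safe intro!: Int_stableI)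
  fix A B assume "A \<in> sets N" "B \<in> sets N"
  then show "\<exists>C. (f -` A \<inter> \<Omega>) \<inter> (f -` B \<inter> \<Omega>) = (f -` C \<inter> \<Omega>) \<and> C \<in> sets N"
    by (intro exI[of _ "A \<inter> B"]) auto
qed

locale arru =
  fixes M :: "'w measure" and S :: "'s measure" and u :: "'s \<Rightarrow> real" and a b :: real
    and xi1 xi2 :: "nat \<Rightarrow> 'w \<Rightarrow> 's" and U :: "nat \<Rightarrow> 'w \<Rightarrow> real"
    and y10 y20 :: real and r1 r2 :: "nat \<Rightarrow> 'w \<Rightarrow> real" and rho1 rho2 :: real
  assumes M: "prob_space M"
    and ab: "0 < a" "a \<le> b"
    and u_meas: "u \<in> borel_measurable S"
    and u_range: "\<forall>s\<in>space S. a \<le> u s \<and> u s \<le> b"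
    and xi1_meas: "\<forall>n\<ge>1. xi1 n \<in> measurable M S"
    and xi2_meas: "\<forall>n\<ge>1. xi2 n \<in> measurable M S"
    and U_meas: "\<forall>n\<ge>1. U n \<in> borel_measurable M"
    and U_distr: "\<forall>n\<ge>1. distr M lborel (U n) = uniform_measure lborel {0<..<1::real}"
    and indep: "prob_space.indep_sets M
        (\<lambda>(k, n). if k = (0::nat) then {xi1 n -` A \<inter> space M | A. A \<in> sets S}
                  else if k = 1 then {xi2 n -` A \<inter> space M | A. A \<in> sets S}
                  else {U n -` A \<inter> space M | A. A \<in> sets (borel :: real measure)})
        ({0, 1, 2} \<times> {1..})"
    and y0: "0 < y10" "0 < y20"
    and r_meas: "\<forall>n. r1 n \<in> borel_measurable (arru_F M S u xi1 xi2 U r1 r2 y10 y20 n)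
                   \<and> r2 n \<in> borel_measurable (arru_F M S u xi1 xi2 U r1 r2 y10 y20 n)"
    and r_range: "\<forall>n. \<forall>w\<in>space M. 0 < r1 n w \<and> r1 n w < 1 \<and> 0 < r2 n w \<and> r2 n w < 1"
    and r_order: "\<forall>n. AE w in M. r2 n w \<le> r1 n w"
    and rho: "0 < rho2" "rho2 \<le> rho1" "rho1 < 1"
    and condE1: "\<forall>\<epsilon>>0. \<exists>c1>0. \<exists>N. \<forall>n\<ge>N.
        measure M {w \<in> space M. \<bar>r1 n w - rho1\<bar> > \<epsilon>} \<le> c1 * exp (- real n * \<epsilon>\<^sup>2)"
    and condE2: "\<forall>\<epsilon>>0. \<exists>c1>0. \<exists>N. \<forall>n\<ge>N.
        measure M {w \<in> space M. \<bar>r2 n w - rho2\<bar> > \<epsilon>} \<le> c1 * exp (- real n * \<epsilon>\<^sup>2)"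
begin

sublocale P: prob_space M by (rule M)

abbreviation "Y n w \<equiv> arru_Y u xi1 xi2 U r1 r2 y10 y20 n w"
definition "Y1 n w = fst (Y n w)"
definition "Y2 n w = snd (Y n w)"
definition "T n w = Y1 n w + Y2 n w"
definition "Z n w = Y1 n w / T n w"
definition "W1 n w = (if Z n w \<le> r1 n w then 1 else (0::real))"
definition "W2 n w = (if r2 n w \<le> Z n w then 1 else (0::real))"

definition "E = (\<lambda>(k, n). if k = (0::nat) then {xi1 n -` A \<inter> space M | A. A \<in> sets S}
                  else if k = 1 then {xi2 n -` A \<inter> space M | A. A \<in> sets S}
                  else {U n -` A \<inter> space M | A. A \<in> sets (borel :: real measure)})"
definition "Sig n = sigma (space M) (\<Union>i\<in>{0,1,2::nat}\<times>{1..n}. E i)"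

lemma Tot_eq: "arru_Ytot u xi1 xi2 U r1 r2 y10 y20 n w = T n w"
  by (simp add: arru_Ytot_def T_def Y1_def Y2_def)
lemma Z_eq: "arru_Z u xi1 xi2 U r1 r2 y10 y20 n w = Z n w"
  by (simp add: arru_Z_def Tot_eq Z_def Y1_def)

lemma Y1_0[simp]: "Y1 0 w = y10" and Y2_0[simp]: "Y2 0 w = y20"
  by (simp_all add: Y1_def Y2_def)

lemma Y1_Suc: "Y1 (Suc n) w = Y1 n w + (if U (Suc n) w < Z n w then 1 else 0) * u (xi1 (Suc n) w) * W1 n w"
  and Y2_Suc: "Y2 (Suc n) w = Y2 n w + (1 - (if U (Suc n) w < Z n w then 1 else 0)) * u (xi2 (Suc n) w) * W2 n w"
  by (simp_all add: Y1_def Y2_def Z_def T_def W1_def W2_def Let_def case_prod_beta)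

lemma E_sub: "E i \<subseteq> Pow (space M)"
  unfolding E_def by (auto split: prod.split)

lemma space_Sig[simp]: "space (Sig n) = space M"
  unfolding Sig_def using E_sub by (intro space_measure_of) blast

lemma sets_Sig: "sets (Sig n) = sigma_sets (space M) (\<Union>i\<in>{0,1,2::nat}\<times>{1..n}. E i)"
  unfolding Sig_def using E_sub by (intro sets_measure_of) blast

lemma Sig_mono: "k \<le> n \<Longrightarrow> f \<in> measurable (Sig k) N \<Longrightarrow> f \<in> measurable (Sig n) N"
proof (rule measurable_sets_mono[of "Sig k"])
  assume "k \<le> n"
  then have "(\<Union>i\<in>{0,1,2::nat}\<times>{1..k}. E i) \<subseteq> (\<Union>i\<in>{0,1,2::nat}\<times>{1..n}. E i)"
    by (intro UN_mono) auto
  then show "sets (Sig k) \<subseteq> sets (Sig n)" unfolding sets_Sig by (rule sigma_sets_mono')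
qed auto

lemma Sig_sub: "subalgebra M (Sig n)"
  unfolding subalgebra_def
proof
  show "space (Sig n) = space M" by simp
  have "(\<Union>i\<in>{0,1,2::nat}\<times>{1..n}. E i) \<subseteq> sets M"
  proof -
    have m1: "\<And>k. Suc 0 \<le> k \<Longrightarrow> xi1 k \<in> measurable M S" and m2: "\<And>k. Suc 0 \<le> k \<Longrightarrow> xi2 k \<in> measurable M S"
      and m3: "\<And>k. Suc 0 \<le> k \<Longrightarrow> U k \<in> borel_measurable M"
      using xi1_meas xi2_meas U_meas by auto
    show ?thesis by (auto simp: E_def split: if_splits intro: measurable_sets[OF m1] measurable_sets[OF m2] measurable_sets[OF m3])
  qed
  then show "sets (Sig n) \<subseteq> sets M" unfolding sets_Sig
    by (intro sets.sigma_sets_subset) auto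
qed

lemma preimage_meas:
  assumes "f \<in> space M \<rightarrow> space N" "\<And>A. A \<in> sets N \<Longrightarrow> f -` A \<inter> space M \<in> E i" "i \<in> {0,1,2}\<times>{1..n}"
  shows "f \<in> measurable (Sig n) N"
  unfolding measurable_def using assms by (auto simp: sets_Sig intro!: sigma_sets.Basic)

lemma xi1_Sig: "1 \<le> k \<Longrightarrow> k \<le> n \<Longrightarrow> xi1 k \<in> measurable (Sig n) S"
  by (rule preimage_meas[where i="(0,k)"]) (use xi1_meas in \<open>auto simp: E_def measurable_def\<close>)
lemma xi2_Sig: "1 \<le> k \<Longrightarrow> k \<le> n \<Longrightarrow> xi2 k \<in> measurable (Sig n) S"
  by (rule preimage_meas[where i="(1,k)"]) (use xi2_meas in \<open>auto simp: E_def measurable_def\<close>)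
lemma U_Sig: "1 \<le> k \<Longrightarrow> k \<le> n \<Longrightarrow> U k \<in> borel_measurable (Sig n)"
  by (rule preimage_meas[where i="(2,k)"]) (auto simp: E_def)

lemma Z_Sig: "Y1 k \<in> borel_measurable (Sig k) \<Longrightarrow> Y2 k \<in> borel_measurable (Sig k) \<Longrightarrow> k \<le> n
   \<Longrightarrow> Z k \<in> borel_measurable (Sig n)"
proof (rule Sig_mono[of k])
  assume [measurable]: "Y1 k \<in> borel_measurable (Sig k)" "Y2 k \<in> borel_measurable (Sig k)"
  have "Z k = (\<lambda>w. Y1 k w / (Y1 k w + Y2 k w))" by (auto simp: fun_eq_iff Z_def T_def)
  then show "Z k \<in> borel_measurable (Sig k)" by simp
qed

lemma r_Sig:
  assumes IH: "\<forall>k<n. Y1 k \<in> borel_measurable (Sig k) \<and> Y2 k \<in> borel_measurable (Sig k)"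
  shows "r1 n \<in> borel_measurable (Sig n) \<and> r2 n \<in> borel_measurable (Sig n)"
proof -
  let ?F = "arru_F M S u xi1 xi2 U r1 r2 y10 y20 n"
  let ?X = "arru_X u xi1 xi2 U r1 r2 y10 y20"
  let ?O = "arru_obs u xi1 xi2 U r1 r2 y10 y20"
  have X: "?X i \<in> borel_measurable (Sig n)" if i: "i \<in> {1..n}" for i
  proof -
    have "Z (i - 1) \<in> borel_measurable (Sig n)" using IH i by (intro Z_Sig) auto
    moreover have "U i \<in> borel_measurable (Sig n)" using i by (intro U_Sig) auto
    ultimately have "(\<lambda>w. if U i w < Z (i - 1) w then 1 else 0::real) \<in> borel_measurable (Sig n)"
      by measurable
    moreover have "?X i = (\<lambda>w. if U i w < Z (i - 1) w then 1 else 0::real)"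
      using i by (auto simp: fun_eq_iff arru_X_def Z_eq)
    ultimately show ?thesis by simp
  qed
  have O: "?O i \<in> measurable (Sig n) S" if i: "i \<in> {1..n}" for i
  proof -
    have [measurable]: "?X i \<in> borel_measurable (Sig n)" using X[OF i] .
    have [measurable]: "xi1 i \<in> measurable (Sig n) S" "xi2 i \<in> measurable (Sig n) S"
      using i by (auto intro!: xi1_Sig xi2_Sig)
    show ?thesis unfolding arru_obs_def[abs_def] by measurable
  qed
  let ?G = "(\<Union>i\<in>{1..n}.
          {?X i -` A \<inter> space M | A. A \<in> sets (borel :: real measure)}
        \<union> {?O i -` A \<inter> space M | A. A \<in> sets S})"
  have Gsub: "?G \<subseteq> sets (Sig n)"
    using measurable_sets[OF X] measurable_sets[OF O] by fastforce
  have GP: "?G \<subseteq> Pow (space M)" by auto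
  have spF: "space ?F = space M" unfolding arru_F_def using GP by (rule space_measure_of)
  have "sets ?F = sigma_sets (space M) ?G" unfolding arru_F_def using GP by (rule sets_measure_of)
  also have "\<dots> \<subseteq> sets (Sig n)"
    using sets.sigma_sets_subset[OF Gsub] by simp
  finally have sub: "sets ?F \<subseteq> sets (Sig n)" .
  show ?thesis using r_meas spF sub by (auto intro: measurable_sets_mono[of ?F])
qed

lemma uxi1_Sig: "1 \<le> k \<Longrightarrow> k \<le> n \<Longrightarrow> (\<lambda>w. u (xi1 k w)) \<in> borel_measurable (Sig n)"
  using measurable_compose[OF xi1_Sig u_meas] by blast
lemma uxi2_Sig: "1 \<le> k \<Longrightarrow> k \<le> n \<Longrightarrow> (\<lambda>w. u (xi2 k w)) \<in> borel_measurable (Sig n)"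
  using measurable_compose[OF xi2_Sig u_meas] by blast

lemma all_Sig: "\<forall>k\<le>n. Y1 k \<in> borel_measurable (Sig k) \<and> Y2 k \<in> borel_measurable (Sig k)
    \<and> r1 k \<in> borel_measurable (Sig k) \<and> r2 k \<in> borel_measurable (Sig k)"
proof (induction n)
  case 0
  then show ?case using r_Sig[of 0] by auto
next
  case (Suc n)
  have Yn: "Y1 n \<in> borel_measurable (Sig (Suc n))" "Y2 n \<in> borel_measurable (Sig (Suc n))"
    and rn: "r1 n \<in> borel_measurable (Sig (Suc n))" "r2 n \<in> borel_measurable (Sig (Suc n))"
    using Suc by (auto intro: Sig_mono[of n])
  have Zn: "Z n \<in> borel_measurable (Sig (Suc n))" using Suc by (intro Z_Sig) auto
  have [measurable]: "U (Suc n) \<in> borel_measurable (Sig (Suc n))"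
    "(\<lambda>w. u (xi1 (Suc n) w)) \<in> borel_measurable (Sig (Suc n))"
    "(\<lambda>w. u (xi2 (Suc n) w)) \<in> borel_measurable (Sig (Suc n))"
    by (auto intro!: U_Sig uxi1_Sig uxi2_Sig)
  note [measurable] = Yn rn Zn
  have Y1S: "Y1 (Suc n) \<in> borel_measurable (Sig (Suc n))"
    unfolding Y1_Suc[abs_def] W1_def by measurable
  have Y2S: "Y2 (Suc n) \<in> borel_measurable (Sig (Suc n))"
    unfolding Y2_Suc[abs_def] W2_def by measurable
  have "r1 (Suc n) \<in> borel_measurable (Sig (Suc n)) \<and> r2 (Suc n) \<in> borel_measurable (Sig (Suc n))"
    using Suc Y1S Y2S by (intro r_Sig) (auto simp: less_Suc_eq)
  with Suc Y1S Y2S show ?case by (auto simp: le_Suc_eq)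
qed

lemma Y1_Sig: "Y1 n \<in> borel_measurable (Sig n)" and Y2_Sig: "Y2 n \<in> borel_measurable (Sig n)"
  and r1_Sig: "r1 n \<in> borel_measurable (Sig n)" and r2_Sig: "r2 n \<in> borel_measurable (Sig n)"
  using all_Sig[of n] by auto

lemma Y1_M[measurable]: "Y1 n \<in> borel_measurable M" and Y2_M[measurable]: "Y2 n \<in> borel_measurable M"
  and r1_M[measurable]: "r1 n \<in> borel_measurable M" and r2_M[measurable]: "r2 n \<in> borel_measurable M"
  by (rule measurable_from_subalg[OF Sig_sub Y1_Sig], rule measurable_from_subalg[OF Sig_sub Y2_Sig],
      rule measurable_from_subalg[OF Sig_sub r1_Sig], rule measurable_from_subalg[OF Sig_sub r2_Sig])

lemma indep_U:
  "P.indep_set (sets (Sig n)) (sigma_sets (space M) {U (Suc n) -` A \<inter> space M | A. A \<in> sets borel})"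
proof -
  define I where "I = (\<lambda>j::bool. if j then {0,1,2::nat}\<times>{1..n} else {(2::nat, Suc n)})"
  have ind': "P.indep_sets E (\<Union>j\<in>UNIV. I j)"
    by (rule P.indep_sets_mono_index[OF _ indep[folded E_def]]) (auto simp: I_def)
  have Int: "Int_stable (E i)" for i
  proof -
    obtain k m where i: "i = (k, m)" by (cases i)
    show ?thesis unfolding i E_def by (auto intro: Int_stable_vimage)
  qed
  have "P.indep_sets (\<lambda>j. sigma_sets (space M) (\<Union>i\<in>I j. E i)) UNIV"
    by (rule P.indep_sets_collect_sigma[OF ind' Int]) (auto simp: disjoint_family_on_def I_def)
  moreover have "(\<lambda>j. sigma_sets (space M) (\<Union>i\<in>I j. E i)) = case_bool (sets (Sig n))
      (sigma_sets (space M) {U (Suc n) -` A \<inter> space M | A. A \<in> sets borel})"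
    by (auto simp: fun_eq_iff I_def sets_Sig E_def split: bool.split)
  ultimately show ?thesis unfolding P.indep_set_def by simp
qed

end


lemma powr_diff_lower:
  fixes t a j y0 :: real
  assumes "0 < y0" "y0 \<le> t" "0 < a" "0 < j"
  shows "a * j * (1 + a / y0) powr (-j-1) * t powr (-j-1) \<le> t powr (-j) - (t + a) powr (-j)"
proof -
  have t: "0 < t" using assms by linarith
  have "\<exists>z. t < z \<and> z < t + a \<and> (t + a) powr (-j) - t powr (-j) = ((t + a) - t) * ((-j) * z powr (-j - 1))"
  proof (rule MVT2)
    show "t < t + a" using assms by simp
    fix x assume "t \<le> x" "x \<le> t + a"
    then have "0 < x" using t by linarith
    then show "((\<lambda>x. x powr (-j)) has_real_derivative (-j) * x powr (-j - 1)) (at x)"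
      by (rule has_real_derivative_powr)
  qed
  then obtain z where z: "t < z" "z < t + a" "(t + a) powr (-j) - t powr (-j) = a * ((-j) * z powr (-j - 1))"
    by auto
  have "(1 + a / y0) * t \<ge> t + a"
  proof -
    have "a \<le> a / y0 * t" using assms by (simp add: field_simps)
    then show ?thesis by (simp add: algebra_simps)
  qed
  then have "((1 + a / y0) * t) powr (-j-1) \<le> z powr (-j-1)"
    using z t assms by (intro powr_mono2') auto
  then have "(1 + a / y0) powr (-j-1) * t powr (-j-1) \<le> z powr (-j-1)"
    using t assms by (simp add: powr_mult)
  then have "a * j * ((1 + a / y0) powr (-j-1) * t powr (-j-1)) \<le> a * j * z powr (-j-1)"
    using assms by (intro mult_left_mono) auto
  then show ?thesis using z(3) by (simp add: algebra_simps)
qed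

lemma split_bound:
  fixes t m l j :: real
  assumes "0 < t" "0 < m" "0 < l" "0 < j"
  shows "t powr (-j) \<le> l * m * t powr (-j-1) + (l * m) powr (-j)"
proof (cases "t \<le> l * m")
  case True
  have "t powr (-j) = t powr (1 + (-j-1))" by simp
  also have "\<dots> = t powr 1 * t powr (-j-1)" by (rule powr_add)
  also have "\<dots> = t * t powr (-j-1)" using assms by simp
  also have "\<dots> \<le> l * m * t powr (-j-1)" using True by (intro mult_right_mono) auto
  finally have "t powr (-j) \<le> l * m * t powr (-j-1)" .
  moreover have "0 \<le> (l * m) powr (-j)" by simp
  ultimately show ?thesis by linarith
next
  case False
  have lm: "0 < l * m" using assms by simp
  have "t powr (-j) \<le> (l * m) powr (-j)"
    by (rule powr_mono2') (use assms lm False in linarith)+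
  moreover have "0 \<le> l * m * t powr (-j-1)" using assms by simp
  ultimately show ?thesis by linarith
qed


context arru begin

definition "y0 = y10 + y20"
definition "mm n w = min (Y1 n w) (Y2 n w) / T n w"
definition "Gr n w = (if U (Suc n) w < Z n w then W1 n w else W2 n w)"

lemma uxi1_bnd: "w \<in> space M \<Longrightarrow> 1 \<le> k \<Longrightarrow> a \<le> u (xi1 k w) \<and> u (xi1 k w) \<le> b"
  using xi1_meas u_range measurable_space by metis
lemma uxi2_bnd: "w \<in> space M \<Longrightarrow> 1 \<le> k \<Longrightarrow> a \<le> u (xi2 k w) \<and> u (xi2 k w) \<le> b"
  using xi2_meas u_range measurable_space by metis

lemma W_01: "W1 n w = 0 \<or> W1 n w = 1" "W2 n w = 0 \<or> W2 n w = 1"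
  by (auto simp: W1_def W2_def)

lemma Y_bnds:
  assumes w: "w \<in> space M"
  shows "y10 \<le> Y1 n w \<and> y20 \<le> Y2 n w \<and> T n w \<le> y0 + real n * b"
proof (induction n)
  case 0
  then show ?case by (simp add: T_def y0_def)
next
  case (Suc n)
  have b1: "a \<le> u (xi1 (Suc n) w)" "u (xi1 (Suc n) w) \<le> b" using uxi1_bnd[OF w, of "Suc n"] by auto
  have b2: "a \<le> u (xi2 (Suc n) w)" "u (xi2 (Suc n) w) \<le> b" using uxi2_bnd[OF w, of "Suc n"] by auto
  have "0 \<le> (if U (Suc n) w < Z n w then 1 else 0) * u (xi1 (Suc n) w) * W1 n w"
    "(if U (Suc n) w < Z n w then 1 else 0) * u (xi1 (Suc n) w) * W1 n w \<le> (if U (Suc n) w < Z n w then b else 0)"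
    "0 \<le> (1 - (if U (Suc n) w < Z n w then 1 else 0)) * u (xi2 (Suc n) w) * W2 n w"
    "(1 - (if U (Suc n) w < Z n w then 1 else 0)) * u (xi2 (Suc n) w) * W2 n w \<le> (if U (Suc n) w < Z n w then 0 else b)"
    using b1 b2 ab W_01[of n w] by auto
  then show ?case using Suc by (auto simp: Y1_Suc Y2_Suc T_def algebra_simps split: if_splits)
qed

lemma pos: "w \<in> space M \<Longrightarrow> 0 < Y1 n w \<and> 0 < Y2 n w \<and> 0 < T n w \<and> y0 \<le> T n w"
  using Y_bnds[of w n] y0 by (auto simp: T_def y0_def)

lemma y0_pos: "0 < y0" using y0 by (simp add: y0_def)

lemma Z_01: "w \<in> space M \<Longrightarrow> 0 < Z n w \<and> Z n w < 1"
  using pos[of w n] by (auto simp: Z_def T_def)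

lemma one_minus_Z: "w \<in> space M \<Longrightarrow> 1 - Z n w = Y2 n w / T n w"
  using pos[of w n] by (auto simp: Z_def T_def field_simps)

lemma mm_pos: "w \<in> space M \<Longrightarrow> 0 < mm n w \<and> mm n w \<le> 1"
  using pos[of w n] by (auto simp: mm_def T_def)

lemma T_Suc_ge: assumes w: "w \<in> space M" shows "T n w + a * Gr n w \<le> T (Suc n) w"
proof -
  have b1: "a \<le> u (xi1 (Suc n) w)" using uxi1_bnd[OF w, of "Suc n"] by auto
  have b2: "a \<le> u (xi2 (Suc n) w)" using uxi2_bnd[OF w, of "Suc n"] by auto
  show ?thesis using b1 b2 W_01[of n w]
    by (auto simp: T_def Y1_Suc Y2_Suc Gr_def)
qed

lemma Gr_ge_mm: assumes w: "w \<in> space M" and r: "r2 n w \<le> r1 n w"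
  shows "mm n w \<le> Z n w * W1 n w + (1 - Z n w) * W2 n w"
proof -
  have z: "Z n w = Y1 n w / T n w" "1 - Z n w = Y2 n w / T n w" using one_minus_Z[OF w] by (auto simp: Z_def)
  have p: "0 < T n w" using pos[OF w] by auto
  have zz: "0 < Z n w" "Z n w < 1" using Z_01[OF w] by auto
  have "mm n w \<le> Y1 n w / T n w" "mm n w \<le> Y2 n w / T n w" unfolding mm_def using p
    by (auto intro!: divide_right_mono)
  then have mz: "mm n w \<le> Z n w" "mm n w \<le> 1 - Z n w" using z by auto
  show ?thesis
  proof (cases "Z n w \<le> r1 n w")
    case True
    then show ?thesis using mz zz W_01[of n w] by (auto simp: W1_def)
  next
    case False
    then have "r2 n w \<le> Z n w" using r by auto
    then show ?thesis using False mz zz by (auto simp: W1_def W2_def)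
  qed
qed

lemma T_Sig: "T n \<in> borel_measurable (Sig n)"
proof -
  note [measurable] = Y1_Sig[of n] Y2_Sig[of n]
  have "T n = (\<lambda>w. Y1 n w + Y2 n w)" by (auto simp: fun_eq_iff T_def)
  then show ?thesis by simp
qed

lemma T_M[measurable]: "T n \<in> borel_measurable M"
  by (rule measurable_from_subalg[OF Sig_sub T_Sig])
lemma Z_M[measurable]: "Z n \<in> borel_measurable M"
  by (rule measurable_from_subalg[OF Sig_sub Z_Sig[OF Y1_Sig Y2_Sig order.refl]])
lemma mm_M[measurable]: "mm n \<in> borel_measurable M"
proof -
  have "mm n = (\<lambda>w. min (Y1 n w) (Y2 n w) / T n w)" by (auto simp: fun_eq_iff mm_def)
  then show ?thesis by simp
qed

lemma intb: fixes B :: real shows "f \<in> borel_measurable M \<Longrightarrow> (\<And>w. w \<in> space M \<Longrightarrow> \<bar>f w\<bar> \<le> B) \<Longrightarrow> integrable M f"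
  by (rule P.integrable_const_bound[where B=B]) auto

lemma Tpow_bnd: "w \<in> space M \<Longrightarrow> 0 < j \<Longrightarrow> 0 < T n w powr (-j) \<and> T n w powr (-j) \<le> y0 powr (-j)"
  using pos[of w n] y0_pos by (auto intro!: powr_mono2')

definition "c1 j = a * j * (1 + a / y0) powr (-j-1)"

lemma step:
  assumes j: "0 < j"
  shows "(\<integral>w. T (Suc n) w powr (-j) \<partial>M) \<le> (\<integral>w. T n w powr (-j) \<partial>M) - c1 j * (\<integral>w. mm n w * T n w powr (-j-1) \<partial>M)"
proof -
  define al where "al w = T n w powr (-j) - (T n w + a) powr (-j)" for w
  have al_bnd: "0 \<le> al w \<and> al w \<le> y0 powr (-j)" if w: "w \<in> space M" for w
  proof -
    have "(T n w + a) powr (-j) \<le> T n w powr (-j)" using pos[OF w] ab j by (intro powr_mono2') auto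
    moreover have "0 \<le> (T n w + a) powr (-j)" by simp
    moreover have "T n w powr (-j) \<le> y0 powr (-j)" using Tpow_bnd[OF w j, of n] by simp
    ultimately show ?thesis unfolding al_def by linarith
  qed
  define q where "q w = (if U (Suc n) w < Z n w then al w * W1 n w else al w * W2 n w)" for w
  have pw: "T (Suc n) w powr (-j) \<le> T n w powr (-j) - q w" if w: "w \<in> space M" for w
  proof -
    have g: "T n w + a * Gr n w \<le> T (Suc n) w" by (rule T_Suc_ge[OF w])
    have tp: "0 < T n w" using pos[OF w] by auto
    show ?thesis
    proof (cases "Gr n w = 1")
      case True
      then have "q w = al w" unfolding q_def using W_01[of n w] by (auto simp: Gr_def split: if_splits)
      moreover have "T (Suc n) w powr (-j) \<le> (T n w + a) powr (-j)"
        using g True tp ab j by (intro powr_mono2') auto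
      ultimately show ?thesis by (simp add: al_def)
    next
      case False
      then have "Gr n w = 0" using W_01[of n w] by (auto simp: Gr_def)
      then have "q w = 0" unfolding q_def using W_01[of n w] by (auto simp: Gr_def split: if_splits)
      moreover have "T (Suc n) w powr (-j) \<le> T n w powr (-j)"
        using g \<open>Gr n w = 0\<close> tp j by (intro powr_mono2') auto
      ultimately show ?thesis by simp
    qed
  qed
  note [measurable] = Y1_Sig[of n] Y2_Sig[of n] r1_Sig[of n] r2_Sig[of n] T_Sig[of n]
    Z_Sig[OF Y1_Sig Y2_Sig order.refl, of n]
  have alS[measurable]: "al \<in> borel_measurable (Sig n)" unfolding al_def[abs_def] by measurable
  have a1S: "(\<lambda>w. al w * W1 n w) \<in> borel_measurable (Sig n)" unfolding W1_def by measurable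
  have a2S: "(\<lambda>w. al w * W2 n w) \<in> borel_measurable (Sig n)" unfolding W2_def by measurable
  have alM[measurable]: "al \<in> borel_measurable M" by (rule measurable_from_subalg[OF Sig_sub alS])
  have UM[measurable]: "U (Suc n) \<in> borel_measurable M" using U_meas by auto
  have W1M[measurable]: "W1 n \<in> borel_measurable M" unfolding W1_def[abs_def] by measurable
  have W2M[measurable]: "W2 n \<in> borel_measurable M" unfolding W2_def[abs_def] by measurable
  have qM[measurable]: "q \<in> borel_measurable M" unfolding q_def[abs_def] by measurable
  have W_bnd: "\<bar>W1 n w\<bar> \<le> 1" "\<bar>W2 n w\<bar> \<le> 1" for w using W_01[of n w] by auto
  have qb: "\<bar>q w\<bar> \<le> y0 powr (-j)" if "w \<in> space M" for w
    using al_bnd[OF that] W_01[of n w] by (auto simp: q_def)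
  have i1: "integrable M (\<lambda>w. T (Suc n) w powr (-j))"
    by (rule intb[where B="y0 powr (-j)"]) (use Tpow_bnd j in auto)
  have i0: "integrable M (\<lambda>w. T n w powr (-j))"
    by (rule intb[where B="y0 powr (-j)"]) (use Tpow_bnd j in auto)
  have iq: "integrable M q" by (rule intb[where B="y0 powr (-j)"]) (use qb in auto)
  have "(\<integral>w. T (Suc n) w powr (-j) \<partial>M) \<le> (\<integral>w. T n w powr (-j) - q w \<partial>M)"
    by (rule integral_mono[OF i1 Bochner_Integration.integrable_diff[OF i0 iq]]) (use pw in auto)
  also have "\<dots> = (\<integral>w. T n w powr (-j) \<partial>M) - (\<integral>w. q w \<partial>M)"
    by (rule Bochner_Integration.integral_diff[OF i0 iq])
  finally have S1: "(\<integral>w. T (Suc n) w powr (-j) \<partial>M) \<le> (\<integral>w. T n w powr (-j) \<partial>M) - (\<integral>w. q w \<partial>M)" .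
  have S2: "(\<integral>w. q w \<partial>M) = (\<integral>w. Z n w * (al w * W1 n w) + (1 - Z n w) * (al w * W2 n w) \<partial>M)"
    unfolding q_def
  proof (rule P.uniform_step[OF Sig_sub _ a1S a2S UM, where B="y0 powr (-j)"])
    show "Z n \<in> borel_measurable (Sig n)" by measurable
    show "distr M lborel (U (Suc n)) = uniform_measure lborel {0<..<1}" using U_distr by auto
    show "P.indep_set (sets (Sig n)) (sigma_sets (space M) {U (Suc n) -` A \<inter> space M |A. A \<in> sets borel})"
      by (rule indep_U)
    show "\<forall>w\<in>space M. 0 \<le> Z n w \<and> Z n w \<le> 1" using Z_01 by (auto intro: less_imp_le)
    show "\<forall>w\<in>space M. \<bar>al w * W1 n w\<bar> \<le> y0 powr - j \<and> \<bar>al w * W2 n w\<bar> \<le> y0 powr - j"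
    proof
      fix w assume w: "w \<in> space M"
      show "\<bar>al w * W1 n w\<bar> \<le> y0 powr - j \<and> \<bar>al w * W2 n w\<bar> \<le> y0 powr - j"
        using al_bnd[OF w] W_01(1)[of n w] W_01(2)[of n w] by (elim disjE) auto
    qed
  qed
  have S3: "c1 j * (\<integral>w. mm n w * T n w powr (-j-1) \<partial>M) \<le> (\<integral>w. Z n w * (al w * W1 n w) + (1 - Z n w) * (al w * W2 n w) \<partial>M)"
  proof -
    have im: "integrable M (\<lambda>w. mm n w * T n w powr (-j-1))"
    proof (rule intb[where B="y0 powr (-j-1)"])
      fix w assume w: "w \<in> space M"
      have m: "0 < mm n w" "mm n w \<le> 1" using mm_pos[OF w] by auto
      have t: "T n w powr (-j-1) \<le> y0 powr (-j-1)"
        by (rule powr_mono2') (use pos[OF w] y0_pos j in auto)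
      have "mm n w * T n w powr (-j-1) \<le> 1 * y0 powr (-j-1)"
        by (rule mult_mono) (use m t in auto)
      moreover have "0 \<le> mm n w * T n w powr (-j-1)" using m by simp
      ultimately show "\<bar>mm n w * T n w powr (-j-1)\<bar> \<le> y0 powr (-j-1)" by simp
    qed simp
    have iz: "integrable M (\<lambda>w. Z n w * (al w * W1 n w) + (1 - Z n w) * (al w * W2 n w))"
    proof (rule intb[where B="y0 powr (-j)"])
      fix w assume w: "w \<in> space M"
      have z: "0 < Z n w" "Z n w < 1" using Z_01[OF w] by auto
      have a: "0 \<le> al w" "al w \<le> y0 powr (-j)" using al_bnd[OF w] by auto
      have h1: "0 \<le> al w * W1 n w \<and> al w * W1 n w \<le> y0 powr (-j)"
        using W_01(1)[of n w] a by (elim disjE) auto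
      have h2: "0 \<le> al w * W2 n w \<and> al w * W2 n w \<le> y0 powr (-j)"
        using W_01(2)[of n w] a by (elim disjE) auto
      have "Z n w * (al w * W1 n w) \<le> Z n w * y0 powr (-j)"
        using h1 z by (intro mult_left_mono) auto
      moreover have "(1 - Z n w) * (al w * W2 n w) \<le> (1 - Z n w) * y0 powr (-j)"
        using h2 z by (intro mult_left_mono) auto
      moreover have "0 \<le> Z n w * (al w * W1 n w)" "0 \<le> (1 - Z n w) * (al w * W2 n w)"
        using h1 h2 z by auto
      ultimately show "\<bar>Z n w * (al w * W1 n w) + (1 - Z n w) * (al w * W2 n w)\<bar> \<le> y0 powr (-j)"
        by (simp add: algebra_simps)
    qed simp
    have "c1 j * (\<integral>w. mm n w * T n w powr (-j-1) \<partial>M) = (\<integral>w. c1 j * (mm n w * T n w powr (-j-1)) \<partial>M)"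
      by simp
    also have "\<dots> \<le> (\<integral>w. Z n w * (al w * W1 n w) + (1 - Z n w) * (al w * W2 n w) \<partial>M)"
    proof (rule integral_mono_AE[OF integrable_mult_right[OF im] iz])
      show "AE w in M. c1 j * (mm n w * T n w powr (- j - 1)) \<le> Z n w * (al w * W1 n w) + (1 - Z n w) * (al w * W2 n w)"
        using r_order[rule_format, of n] AE_space[of M]
      proof eventually_elim
        case (elim w)
        then have w: "w \<in> space M" by simp
        have "c1 j * T n w powr (-j-1) \<le> al w"
          unfolding c1_def al_def using powr_diff_lower[of y0 "T n w" a j] pos[OF w] y0_pos ab j by simp
        then have "mm n w * (c1 j * T n w powr (-j-1)) \<le> mm n w * al w"
          using mm_pos[OF w, of n] by (intro mult_left_mono) auto
        also have "\<dots> \<le> (Z n w * W1 n w + (1 - Z n w) * W2 n w) * al w"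
          using Gr_ge_mm[OF w elim(1)] al_bnd[OF w] by (intro mult_right_mono) auto
        finally show ?case by (simp add: algebra_simps)
      qed
    qed
    finally show ?thesis .
  qed
  show ?thesis using S1 S2 S3 by linarith
qed

end


lemma seq_decay:
  fixes x e :: "nat \<Rightarrow> real" and c C :: real and J :: nat
  assumes J: "1 \<le> J" and c: "0 < c" and C: "0 \<le> C"
    and x0: "\<And>n. 0 \<le> x n" and e0: "\<And>n. 0 \<le> e n"
    and rec: "\<And>n. x (Suc n) \<le> x n - c * e n"
    and spl: "\<And>n l. 0 < l \<Longrightarrow> x n \<le> l * e n + l powr (- real J) * C"
  shows "\<exists>A. \<forall>n. x n \<le> A * (real n + 1) powr (- real J)"
proof -
  define \<kappa> where "\<kappa> = 2 * real J / c"
  have kp: "0 < \<kappa>" using J c by (simp add: \<kappa>_def)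
  define A where "A = max (x 0) (2 * \<kappa> ^ J * C)"
  have "x n \<le> A * (real n + 1) powr (- real J)" for n
  proof (induction n)
    case 0
    then show ?case by (simp add: A_def)
  next
    case (Suc n)
    define s where "s = A * (real n + 2) powr (- real J)"
    have np: "0 < real n + 2" by simp
    show ?case
    proof (cases "x n \<le> s")
      case True
      have "x (Suc n) \<le> x n" using rec[of n] e0[of n] c by (smt (verit) mult_nonneg_nonneg)
      then show ?thesis using True by (simp add: s_def add.commute)
    next
      case False
      define l where "l = (real n + 2) / \<kappa>"
      have lp: "0 < l" using kp by (simp add: l_def)
      have "l powr (- real J) = \<kappa> ^ J * (real n + 2) powr (- real J)"
        using kp by (simp add: l_def powr_divide powr_minus_divide powr_realpow divide_simps)
      then have "l powr (- real J) * C \<le> (A / 2) * (real n + 2) powr (- real J)"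
        using C by (auto simp: A_def intro!: mult_right_mono)
      also have "\<dots> < x n / 2" using False by (simp add: s_def)
      finally have "x n / 2 \<le> l * e n" using spl[OF lp, of n] by linarith
      then have en: "x n * \<kappa> / (2 * (real n + 2)) \<le> e n"
        using kp lp by (simp add: l_def field_simps)
      define t where "t = c * \<kappa> / (2 * (real n + 2))"
      have t: "t = real J / (real n + 2)" using c by (simp add: t_def \<kappa>_def field_simps)
      have "x (Suc n) \<le> x n * (1 - t)"
        using rec[of n] mult_left_mono[OF en, of c] c by (simp add: t_def algebra_simps)
      show ?thesis
      proof (cases "1 - t \<le> 0")
        case True
        then have "x (Suc n) \<le> 0" using \<open>x (Suc n) \<le> x n * (1 - t)\<close> x0[of n]
          by (smt (verit) mult_nonneg_nonpos)
        moreover have "0 \<le> A * (real (Suc n) + 1) powr (- real J)"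
          using x0[of 0] by (simp add: A_def)
        ultimately show ?thesis by linarith
      next
        case False
        have "x (Suc n) \<le> A * (real n + 1) powr (- real J) * (1 - t)"
          using \<open>x (Suc n) \<le> x n * (1 - t)\<close> Suc False by (smt (verit) mult_right_mono)
        also have "\<dots> \<le> A * (real n + 2) powr (- real J)"
        proof -
          have A0: "0 \<le> A" using x0[of 0] by (simp add: A_def)
          have h: "-1 \<le> - 1 / (real n + 2)" by (simp add: field_simps)
          have "1 + real J * (- 1 / (real n + 2)) \<le> (1 + - 1 / (real n + 2)) ^ J"
            by (rule Bernoulli_inequality[OF h])
          then have b1: "1 - t \<le> ((real n + 1) / (real n + 2)) ^ J"
            by (simp add: t field_simps)
          have "(real n + 1) powr (- real J) * ((real n + 1) / (real n + 2)) ^ J = (real n + 2) powr (- real J)"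
            by (simp add: powr_minus_divide powr_realpow power_divide field_simps)
          then have "(real n + 1) powr (- real J) * (1 - t) \<le> (real n + 2) powr (- real J)"
            using b1 by (smt (verit) mult_left_mono powr_ge_zero)
          then show ?thesis using A0 by (metis mult.assoc mult_left_mono)
        qed
        finally show ?thesis by (simp add: add.commute)
      qed
    qed
  qed
  then show ?thesis by blast
qed


lemma ratio_step:
  fixes y1 y2 d1 d2 b y0 th :: real
  assumes "0 < y1" "0 < y2" "0 < y0" "y0 \<le> y1 + y2" "0 \<le> d1" "0 \<le> d2" "d2 \<le> b"
    "d1 = 0 \<or> d2 = 0" "0 < d2 \<Longrightarrow> th \<le> y1 / (y1 + y2)" "0 < th"
  shows "(y1 + y2 + d1 + d2) / (y1 + d1) \<le> max ((y1 + y2) / y1) ((1 + b / y0) / th)"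
proof (cases "d2 = 0")
  case True
  have "(y1 + y2 + d1) / (y1 + d1) \<le> (y1 + y2) / y1"
    using assms by (simp add: field_simps)
  then show ?thesis using True by simp
next
  case False
  then have d: "d1 = 0" "0 < d2" using assms by auto
  have th: "th * (y1 + y2) \<le> y1" using assms(9)[OF d(2)] assms by (simp add: field_simps)
  have "(y1 + y2 + d2) / y1 \<le> (y1 + y2) * (1 + b / y0) / y1"
  proof (rule divide_right_mono)
    have "d2 \<le> (y1 + y2) * (b / y0)"
    proof -
      have "b \<le> (y1 + y2) * (b / y0)" using assms mult_left_mono[of y0 "y1+y2" b] by (simp add: field_simps)
      then show ?thesis using assms by linarith
    qed
    then show "y1 + y2 + d2 \<le> (y1 + y2) * (1 + b / y0)" by (simp add: algebra_simps)
  qed (use assms in auto)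
  also have "\<dots> \<le> (1 + b / y0) / th"
  proof -
    have pb: "0 \<le> 1 + b / y0" using assms by auto
    have "(y1 + y2) * (1 + b / y0) * th \<le> (1 + b / y0) * y1"
      using mult_left_mono[OF th pb] by (metis (no_types, lifting) mult.commute mult.left_commute)
    then show ?thesis using assms by (simp add: mult_imp_div_pos_le mult_imp_le_div_pos)
  qed
  finally show ?thesis using d by simp
qed


lemma summable_exp_poly:
  fixes e A B j :: real assumes "0 < e" "0 < A" "0 < B"
  shows "summable (\<lambda>k::nat. exp (- real k * e) * ((A + (real k + 1) * B) powr j))"
proof (rule summable_comparison_test_bigo)
  show "summable (\<lambda>n::nat. norm (real n powr (-2)))" using summable_real_powr_iff[of "-2"] by simp
  show "(\<lambda>k::nat. exp (- real k * e) * ((A + (real k + 1) * B) powr j)) \<in> O(\<lambda>n. real n powr (-2))"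
    using assms by real_asymp
qed


context arru begin

definition "R1 n w = T n w / Y1 n w"
definition "R2 n w = T n w / Y2 n w"
definition "d1 n w = (if U (Suc n) w < Z n w then 1 else 0) * u (xi1 (Suc n) w) * W1 n w"
definition "d2 n w = (1 - (if U (Suc n) w < Z n w then 1 else 0)) * u (xi2 (Suc n) w) * W2 n w"

lemma d_props:
  assumes w: "w \<in> space M"
  shows "0 \<le> d1 n w" "d1 n w \<le> b" "0 \<le> d2 n w" "d2 n w \<le> b" "d1 n w = 0 \<or> d2 n w = 0"
    "0 < d1 n w \<Longrightarrow> Z n w \<le> r1 n w" "0 < d2 n w \<Longrightarrow> r2 n w \<le> Z n w"
    "Y1 (Suc n) w = Y1 n w + d1 n w" "Y2 (Suc n) w = Y2 n w + d2 n w"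
proof -
  have b1: "a \<le> u (xi1 (Suc n) w)" "u (xi1 (Suc n) w) \<le> b" using uxi1_bnd[OF w, of "Suc n"] by auto
  have b2: "a \<le> u (xi2 (Suc n) w)" "u (xi2 (Suc n) w) \<le> b" using uxi2_bnd[OF w, of "Suc n"] by auto
  show "0 \<le> d1 n w" "d1 n w \<le> b" "0 \<le> d2 n w" "d2 n w \<le> b" "d1 n w = 0 \<or> d2 n w = 0"
    "0 < d1 n w \<Longrightarrow> Z n w \<le> r1 n w" "0 < d2 n w \<Longrightarrow> r2 n w \<le> Z n w"
    using b1 b2 ab W_01[of n w] by (auto simp: d1_def d2_def W1_def W2_def split: if_splits)
  show "Y1 (Suc n) w = Y1 n w + d1 n w" "Y2 (Suc n) w = Y2 n w + d2 n w"
    by (simp_all add: Y1_Suc Y2_Suc d1_def d2_def)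
qed

definition "th2 = rho2 / 2"
definition "th1 = (1 - rho1) / 2"
definition "K1 = max (y0 / y10) ((1 + b / y0) / th2)"
definition "K2 = max (y0 / y20) ((1 + b / y0) / th1)"
definition "bad2 k = {w \<in> space M. r2 k w < th2}"
definition "bad1 k = {w \<in> space M. 1 - th1 < r1 k w}"
definition "Bk1 j k = ((y0 + (real k + 1) * b) / y10) powr j"
definition "Bk2 j k = ((y0 + (real k + 1) * b) / y20) powr j"

lemma th_pos: "0 < th1" "0 < th2" using rho by (auto simp: th1_def th2_def)

lemma R1_good: assumes w: "w \<in> space M" and g: "th2 \<le> r2 n w"
  shows "R1 (Suc n) w \<le> max (R1 n w) ((1 + b / y0) / th2)"
proof -
  have p: "0 < Y1 n w" "0 < Y2 n w" "y0 \<le> T n w" using pos[OF w] by auto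
  have "(Y1 n w + Y2 n w + d1 n w + d2 n w) / (Y1 n w + d1 n w) \<le> max ((Y1 n w + Y2 n w) / Y1 n w) ((1 + b / y0) / th2)"
  proof (rule ratio_step)
    show "0 < y0" by (rule y0_pos)
    show "y0 \<le> Y1 n w + Y2 n w" using p by (simp add: T_def)
    assume "0 < d2 n w"
    then have "r2 n w \<le> Z n w" using d_props(7)[OF w] by auto
    then show "th2 \<le> Y1 n w / (Y1 n w + Y2 n w)" using g by (simp add: Z_def T_def)
  qed (use p d_props[OF w, of n] th_pos in auto)
  then show ?thesis using d_props[OF w, of n] by (simp add: R1_def T_def add_ac)
qed

lemma R2_good: assumes w: "w \<in> space M" and g: "r1 n w \<le> 1 - th1"
  shows "R2 (Suc n) w \<le> max (R2 n w) ((1 + b / y0) / th1)"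
proof -
  have p: "0 < Y1 n w" "0 < Y2 n w" "y0 \<le> T n w" using pos[OF w] by auto
  have "(Y2 n w + Y1 n w + d2 n w + d1 n w) / (Y2 n w + d2 n w) \<le> max ((Y2 n w + Y1 n w) / Y2 n w) ((1 + b / y0) / th1)"
  proof (rule ratio_step)
    show "0 < y0" by (rule y0_pos)
    show "y0 \<le> Y2 n w + Y1 n w" using p by (simp add: T_def add_ac)
    assume "0 < d1 n w"
    then have "Z n w \<le> r1 n w" using d_props(6)[OF w] by auto
    then have "Z n w \<le> 1 - th1" using g by linarith
    then show "th1 \<le> Y2 n w / (Y2 n w + Y1 n w)" using one_minus_Z[OF w, of n] by (simp add: T_def add_ac)
  qed (use p d_props[OF w, of n] th_pos in auto)
  then show ?thesis using d_props[OF w, of n] by (simp add: R2_def T_def add_ac)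
qed

lemma R1_always: assumes w: "w \<in> space M" shows "R1 n w \<le> (y0 + real n * b) / y10"
proof -
  have "T n w \<le> y0 + real n * b" "y10 \<le> Y1 n w" "0 < T n w" using Y_bnds[OF w, of n] pos[OF w, of n] by auto
  then show ?thesis unfolding R1_def using y0 by (intro frac_le) auto
qed

lemma R2_always: assumes w: "w \<in> space M" shows "R2 n w \<le> (y0 + real n * b) / y20"
proof -
  have "T n w \<le> y0 + real n * b" "y20 \<le> Y2 n w" "0 < T n w" using Y_bnds[OF w, of n] pos[OF w, of n] by auto
  then show ?thesis unfolding R2_def using y0 by (intro frac_le) auto
qed

lemma R1_pos: "w \<in> space M \<Longrightarrow> 0 < R1 n w" and R2_pos: "w \<in> space M \<Longrightarrow> 0 < R2 n w"
  using pos[of w n] by (auto simp: R1_def R2_def)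

lemma R1_bound:
  assumes w: "w \<in> space M" and j: "0 < j"
  shows "R1 n w powr j \<le> K1 powr j + (\<Sum>k<n. indicator (bad2 k) w * Bk1 j k)"
proof (induction n)
  case 0
  have "R1 0 w = y0 / y10" by (simp add: R1_def T_def y0_def)
  then have "R1 0 w \<le> K1" by (simp add: K1_def)
  then show ?case using R1_pos[OF w, of 0] j by (simp add: powr_mono2)
next
  case (Suc n)
  have S0: "0 \<le> (\<Sum>k<n. indicator (bad2 k) w * Bk1 j k)"
    by (intro sum_nonneg) (auto simp: Bk1_def)
  have K1p: "0 < K1" unfolding K1_def using y0 y0_pos by (intro less_le_trans[OF _ max.cobounded1]) simp
  show ?case
  proof (cases "w \<in> bad2 n")
    case True
    have "R1 (Suc n) w powr j \<le> Bk1 j n"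
      unfolding Bk1_def using R1_always[OF w, of "Suc n"] R1_pos[OF w, of "Suc n"] j
      by (intro powr_mono2) (auto simp: add_ac)
    moreover have "(\<Sum>k<Suc n. indicator (bad2 k) w * Bk1 j k) = (\<Sum>k<n. indicator (bad2 k) w * Bk1 j k) + Bk1 j n"
      using True by simp
    ultimately show ?thesis using S0 powr_ge_zero[of K1 j] by linarith
  next
    case False
    then have g: "th2 \<le> r2 n w" using w by (auto simp: bad2_def)
    have "R1 (Suc n) w \<le> max (R1 n w) K1"
      using R1_good[OF w g] by (auto simp: K1_def)
    then have "R1 (Suc n) w powr j \<le> max (R1 n w) K1 powr j"
      using R1_pos[OF w, of "Suc n"] j by (intro powr_mono2) auto
    also have "\<dots> \<le> max (R1 n w powr j) (K1 powr j)"
      by (auto simp: max_def)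
    also have "\<dots> \<le> K1 powr j + (\<Sum>k<n. indicator (bad2 k) w * Bk1 j k)"
      using Suc S0 by auto
    finally show ?thesis using False by simp
  qed
qed

lemma R2_bound:
  assumes w: "w \<in> space M" and j: "0 < j"
  shows "R2 n w powr j \<le> K2 powr j + (\<Sum>k<n. indicator (bad1 k) w * Bk2 j k)"
proof (induction n)
  case 0
  have "R2 0 w = y0 / y20" by (simp add: R2_def T_def y0_def)
  then have "R2 0 w \<le> K2" by (simp add: K2_def)
  then show ?case using R2_pos[OF w, of 0] j by (simp add: powr_mono2)
next
  case (Suc n)
  have S0: "0 \<le> (\<Sum>k<n. indicator (bad1 k) w * Bk2 j k)"
    by (intro sum_nonneg) (auto simp: Bk2_def)
  have K2p: "0 < K2" unfolding K2_def using y0 y0_pos by (intro less_le_trans[OF _ max.cobounded1]) simp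
  show ?case
  proof (cases "w \<in> bad1 n")
    case True
    have "R2 (Suc n) w powr j \<le> Bk2 j n"
      unfolding Bk2_def using R2_always[OF w, of "Suc n"] R2_pos[OF w, of "Suc n"] j
      by (intro powr_mono2) (auto simp: add_ac)
    moreover have "(\<Sum>k<Suc n. indicator (bad1 k) w * Bk2 j k) = (\<Sum>k<n. indicator (bad1 k) w * Bk2 j k) + Bk2 j n"
      using True by simp
    ultimately show ?thesis using S0 powr_ge_zero[of K2 j] by linarith
  next
    case False
    then have g: "r1 n w \<le> 1 - th1" using w by (auto simp: bad1_def)
    have "R2 (Suc n) w \<le> max (R2 n w) K2"
      using R2_good[OF w g] by (auto simp: K2_def)
    then have "R2 (Suc n) w powr j \<le> max (R2 n w) K2 powr j"
      using R2_pos[OF w, of "Suc n"] j by (intro powr_mono2) auto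
    also have "\<dots> \<le> max (R2 n w powr j) (K2 powr j)"
      by (auto simp: max_def)
    also have "\<dots> \<le> K2 powr j + (\<Sum>k<n. indicator (bad1 k) w * Bk2 j k)"
      using Suc S0 by auto
    finally show ?thesis using False by simp
  qed
qed

end


lemma tail_sum_bound:
  fixes p B :: "nat \<Rightarrow> real" and c e :: real
  assumes p: "\<And>k. 0 \<le> p k \<and> p k \<le> 1" and B: "\<And>k. 0 \<le> B k"
    and tail: "\<And>k. N \<le> k \<Longrightarrow> p k \<le> c * exp (- real k * e)"
    and sm: "summable (\<lambda>k. c * exp (- real k * e) * B k)"
  shows "\<exists>S. \<forall>n. (\<Sum>k<n. p k * B k) \<le> S"
proof -
  define G where "G k = (if k < N then B k else c * exp (- real k * e) * B k)" for k
  have "summable G"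
  proof (subst summable_cong)
    show "eventually (\<lambda>k. G k = c * exp (- real k * e) * B k) sequentially"
      unfolding G_def eventually_sequentially by (intro exI[of _ N]) auto
  qed (rule sm)
  have pG: "p k * B k \<le> G k" for k
  proof (cases "k < N")
    case True
    then show ?thesis using p[of k] B[of k] by (simp add: G_def mult_left_le_one_le)
  next
    case False
    then show ?thesis using tail[of k] B[of k] by (simp add: G_def mult_right_mono)
  qed
  have G0: "0 \<le> G k" for k using pG[of k] p[of k] B[of k] by (smt (verit) mult_nonneg_nonneg)
  have "(\<Sum>k<n. p k * B k) \<le> suminf G" for n
  proof -
    have "(\<Sum>k<n. p k * B k) \<le> (\<Sum>k<n. G k)" by (intro sum_mono pG)
    also have "\<dots> \<le> suminf G" by (rule sum_le_suminf[OF \<open>summable G\<close>]) (auto intro: G0)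
    finally show ?thesis .
  qed
  then show ?thesis by blast
qed

context arru begin

lemma R1_M[measurable]: "R1 n \<in> borel_measurable M"
proof -
  have "R1 n = (\<lambda>w. T n w / Y1 n w)" by (auto simp: fun_eq_iff R1_def)
  then show ?thesis by simp
qed
lemma R2_M[measurable]: "R2 n \<in> borel_measurable M"
proof -
  have "R2 n = (\<lambda>w. T n w / Y2 n w)" by (auto simp: fun_eq_iff R2_def)
  then show ?thesis by simp
qed

lemma bad2_sets[measurable]: "bad2 k \<in> sets M" unfolding bad2_def by measurable
lemma bad1_sets[measurable]: "bad1 k \<in> sets M" unfolding bad1_def by measurable

lemma moment_from_bound:
  fixes R :: "nat \<Rightarrow> 'w \<Rightarrow> real" and bad :: "nat \<Rightarrow> 'w set" and B Bd :: "nat \<Rightarrow> real" and K SS :: real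
  assumes Rm: "\<And>n. R n \<in> borel_measurable M" and badm: "\<And>k. bad k \<in> sets M"
    and Rb: "\<And>n w. w \<in> space M \<Longrightarrow> 0 \<le> R n w \<and> R n w \<le> Bd n"
    and bnd: "\<And>n w. w \<in> space M \<Longrightarrow> R n w \<le> K + (\<Sum>k<n. indicator (bad k) w * B k)"
    and B0: "\<And>k. 0 \<le> B k"
    and SS: "\<And>n. (\<Sum>k<n. measure M (bad k) * B k) \<le> SS"
  shows "(\<integral>w. R n w \<partial>M) \<le> K + SS"
proof -
  have ii: "integrable M (\<lambda>w. indicator (bad k) w * B k)" for k
    by (intro integrable_mult_left integrable_real_indicator badm) (simp add: P.emeasure_finite less_top[symmetric])
  have iR: "integrable M (R n)"
    by (rule intb[where B="Bd n", OF Rm]) (use Rb in \<open>auto simp: abs_le_iff\<close>)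
  have "(\<integral>w. R n w \<partial>M) \<le> (\<integral>w. K + (\<Sum>k<n. indicator (bad k) w * B k) \<partial>M)"
  proof (rule integral_mono[OF iR])
    show "integrable M (\<lambda>w. K + (\<Sum>k<n. indicator (bad k) w * B k))"
      by (intro Bochner_Integration.integrable_add P.integrable_const Bochner_Integration.integrable_sum ii)
  qed (use bnd in auto)
  also have "\<dots> = K + (\<Sum>k<n. measure M (bad k) * B k)"
  proof -
    have "(\<integral>w. K + (\<Sum>k<n. indicator (bad k) w * B k) \<partial>M) = (\<integral>w. K \<partial>M) + (\<integral>w. (\<Sum>k<n. indicator (bad k) w * B k) \<partial>M)"
      by (intro Bochner_Integration.integral_add P.integrable_const Bochner_Integration.integrable_sum ii)
    also have "(\<integral>w. K \<partial>M) = K" by (simp add: P.prob_space)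
    also have "(\<integral>w. (\<Sum>k<n. indicator (bad k) w * B k) \<partial>M) = (\<Sum>k<n. (\<integral>w. indicator (bad k) w * B k \<partial>M))"
      by (intro Bochner_Integration.integral_sum ii)
    also have "\<dots> = (\<Sum>k<n. measure M (bad k) * B k)"
    proof (intro sum.cong refl)
      fix k
      have "(\<integral>w. indicator (bad k) w * B k \<partial>M) = (\<integral>w. indicator (bad k) w \<partial>M) * B k"
        by (rule integral_mult_left_zero)
      also have "\<dots> = measure M (bad k) * B k" using badm[of k] by (simp add: Int_absorb2 sets.sets_into_space)
      finally show "(\<integral>w. indicator (bad k) w * B k \<partial>M) = measure M (bad k) * B k" .
    qed
    finally show ?thesis .
  qed
  also have "\<dots> \<le> K + SS" using SS by simp
  finally show ?thesis .
qed

end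


context arru begin

lemma R1_moment: assumes j: "0 < j" shows "\<exists>C. \<forall>n. (\<integral>w. R1 n w powr j \<partial>M) \<le> C"
proof -
  obtain c N where c: "0 < c" and cN: "\<And>n. N \<le> n \<Longrightarrow>
      measure M {w \<in> space M. \<bar>r2 n w - rho2\<bar> > th2} \<le> c * exp (- real n * th2\<^sup>2)"
    using condE2 th_pos by blast
  have p: "0 \<le> measure M (bad2 k) \<and> measure M (bad2 k) \<le> 1" for k by simp
  have tail: "measure M (bad2 k) \<le> c * exp (- real k * th2\<^sup>2)" if "N \<le> k" for k
  proof -
    have "bad2 k \<subseteq> {w \<in> space M. \<bar>r2 k w - rho2\<bar> > th2}"
      using rho by (auto simp: bad2_def th2_def)
    then have "measure M (bad2 k) \<le> measure M {w \<in> space M. \<bar>r2 k w - rho2\<bar> > th2}"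
      by (intro P.finite_measure_mono) measurable
    then show ?thesis using cN[OF that] by simp
  qed
  have sm: "summable (\<lambda>k. c * exp (- real k * th2\<^sup>2) * Bk1 j k)"
  proof -
    have "summable (\<lambda>k::nat. exp (- real k * th2\<^sup>2) * ((y0 / y10 + (real k + 1) * (b / y10)) powr j))"
      by (rule summable_exp_poly) (use th_pos y0 y0_pos ab in auto)
    then have "summable (\<lambda>k::nat. c * (exp (- real k * th2\<^sup>2) * ((y0 / y10 + (real k + 1) * (b / y10)) powr j)))"
      by (rule summable_mult)
    moreover have "(y0 / y10 + (real k + 1) * (b / y10)) = (y0 + (real k + 1) * b) / y10" for k
      using y0 by (simp add: field_simps)
    ultimately show ?thesis by (simp add: Bk1_def mult.assoc)
  qed
  obtain SS where SS: "\<And>n. (\<Sum>k<n. measure M (bad2 k) * Bk1 j k) \<le> SS"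
    using tail_sum_bound[OF p _ tail sm] by (auto simp: Bk1_def)
  have "(\<integral>w. R1 n w powr j \<partial>M) \<le> K1 powr j + SS" for n
  proof (rule moment_from_bound[where R="\<lambda>n w. R1 n w powr j" and bad=bad2 and B="Bk1 j"
        and Bd="\<lambda>n. ((y0 + real n * b) / y10) powr j"])
    fix n w assume w: "w \<in> space M"
    show "0 \<le> R1 n w powr j \<and> R1 n w powr j \<le> ((y0 + real n * b) / y10) powr j"
      using R1_always[OF w, of n] R1_pos[OF w, of n] j by (auto intro: powr_mono2)
    show "R1 n w powr j \<le> K1 powr j + (\<Sum>k<n. indicator (bad2 k) w * Bk1 j k)"
      by (rule R1_bound[OF w j])
  qed (use SS in \<open>auto simp: Bk1_def\<close>)
  then show ?thesis by blast
qed

lemma R2_moment: assumes j: "0 < j" shows "\<exists>C. \<forall>n. (\<integral>w. R2 n w powr j \<partial>M) \<le> C"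
proof -
  obtain c N where c: "0 < c" and cN: "\<And>n. N \<le> n \<Longrightarrow>
      measure M {w \<in> space M. \<bar>r1 n w - rho1\<bar> > th1} \<le> c * exp (- real n * th1\<^sup>2)"
    using condE1 th_pos by blast
  have p: "0 \<le> measure M (bad1 k) \<and> measure M (bad1 k) \<le> 1" for k by simp
  have tail: "measure M (bad1 k) \<le> c * exp (- real k * th1\<^sup>2)" if "N \<le> k" for k
  proof -
    have "bad1 k \<subseteq> {w \<in> space M. \<bar>r1 k w - rho1\<bar> > th1}"
    proof
      fix w assume "w \<in> bad1 k"
      then have w: "w \<in> space M" "1 - th1 < r1 k w" by (auto simp: bad1_def)
      have "1 - rho1 = 2 * th1" by (simp add: th1_def)
      then have "th1 < r1 k w - rho1" using w by linarith
      then show "w \<in> {w \<in> space M. \<bar>r1 k w - rho1\<bar> > th1}" using w by auto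
    qed
    then have "measure M (bad1 k) \<le> measure M {w \<in> space M. \<bar>r1 k w - rho1\<bar> > th1}"
      by (intro P.finite_measure_mono) measurable
    then show ?thesis using cN[OF that] by simp
  qed
  have sm: "summable (\<lambda>k. c * exp (- real k * th1\<^sup>2) * Bk2 j k)"
  proof -
    have "summable (\<lambda>k::nat. exp (- real k * th1\<^sup>2) * ((y0 / y20 + (real k + 1) * (b / y20)) powr j))"
      by (rule summable_exp_poly) (use th_pos y0 y0_pos ab in auto)
    then have "summable (\<lambda>k::nat. c * (exp (- real k * th1\<^sup>2) * ((y0 / y20 + (real k + 1) * (b / y20)) powr j)))"
      by (rule summable_mult)
    moreover have "(y0 / y20 + (real k + 1) * (b / y20)) = (y0 + (real k + 1) * b) / y20" for k
      using y0 by (simp add: field_simps)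
    ultimately show ?thesis by (simp add: Bk2_def mult.assoc)
  qed
  obtain SS where SS: "\<And>n. (\<Sum>k<n. measure M (bad1 k) * Bk2 j k) \<le> SS"
    using tail_sum_bound[OF p _ tail sm] by (auto simp: Bk2_def)
  have "(\<integral>w. R2 n w powr j \<partial>M) \<le> K2 powr j + SS" for n
  proof (rule moment_from_bound[where R="\<lambda>n w. R2 n w powr j" and bad=bad1 and B="Bk2 j"
        and Bd="\<lambda>n. ((y0 + real n * b) / y20) powr j"])
    fix n w assume w: "w \<in> space M"
    show "0 \<le> R2 n w powr j \<and> R2 n w powr j \<le> ((y0 + real n * b) / y20) powr j"
      using R2_always[OF w, of n] R2_pos[OF w, of n] j by (auto intro: powr_mono2)
    show "R2 n w powr j \<le> K2 powr j + (\<Sum>k<n. indicator (bad1 k) w * Bk2 j k)"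
      by (rule R2_bound[OF w j])
  qed (use SS in \<open>auto simp: Bk2_def\<close>)
  then show ?thesis by blast
qed

end


lemma powr_le_1_plus:
  fixes x j J :: real assumes "0 \<le> x" "0 < j" "j \<le> J"
  shows "x powr j \<le> 1 + x powr J"
proof (cases "x \<le> 1")
  case True
  have "x powr j \<le> 1 powr j" using assms True by (intro powr_mono2) auto
  then show ?thesis by (simp add: add_increasing2)
next
  case False
  then have "x powr j \<le> x powr J" using assms by (intro powr_mono) auto
  then show ?thesis by simp
qed

context arru begin

lemma mm_pow_le: assumes w: "w \<in> space M" and j: "0 < j"
  shows "mm n w powr (-j) \<le> R1 n w powr j + R2 n w powr j"
proof -
  have p: "0 < Y1 n w" "0 < Y2 n w" "0 < T n w" using pos[OF w] by auto
  show ?thesis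
  proof (cases "Y1 n w \<le> Y2 n w")
    case True
    then have "mm n w powr (-j) = R1 n w powr j"
      using p by (simp add: mm_def R1_def powr_divide powr_minus inverse_divide)
    then show ?thesis by simp
  next
    case False
    then have "mm n w powr (-j) = R2 n w powr j"
      using p by (simp add: mm_def R2_def powr_divide powr_minus inverse_divide)
    then show ?thesis by simp
  qed
qed

lemma mm_int: assumes j: "0 < j" shows "integrable M (\<lambda>w. mm n w powr (-j))"
proof (rule intb[where B="((y0 + real n * b) / y10) powr j + ((y0 + real n * b) / y20) powr j"])
  fix w assume w: "w \<in> space M"
  have "R1 n w powr j \<le> ((y0 + real n * b) / y10) powr j"
    using R1_always[OF w, of n] R1_pos[OF w, of n] j by (intro powr_mono2) auto
  moreover have "R2 n w powr j \<le> ((y0 + real n * b) / y20) powr j"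
    using R2_always[OF w, of n] R2_pos[OF w, of n] j by (intro powr_mono2) auto
  ultimately show "\<bar>mm n w powr (-j)\<bar> \<le> ((y0 + real n * b) / y10) powr j + ((y0 + real n * b) / y20) powr j"
    using mm_pow_le[OF w j, of n] by simp
qed measurable

lemma R_int: assumes j: "0 < j" shows "integrable M (\<lambda>w. R1 n w powr j)" "integrable M (\<lambda>w. R2 n w powr j)"
proof -
  show "integrable M (\<lambda>w. R1 n w powr j)"
  proof (rule intb[where B="((y0 + real n * b) / y10) powr j"])
    fix w assume w: "w \<in> space M"
    show "\<bar>R1 n w powr j\<bar> \<le> ((y0 + real n * b) / y10) powr j"
      using R1_always[OF w, of n] R1_pos[OF w, of n] j by (auto intro: powr_mono2)
  qed measurable
  show "integrable M (\<lambda>w. R2 n w powr j)"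
  proof (rule intb[where B="((y0 + real n * b) / y20) powr j"])
    fix w assume w: "w \<in> space M"
    show "\<bar>R2 n w powr j\<bar> \<le> ((y0 + real n * b) / y20) powr j"
      using R2_always[OF w, of n] R2_pos[OF w, of n] j by (auto intro: powr_mono2)
  qed measurable
qed

lemma mm_moment: assumes j: "0 < j" shows "\<exists>C. 0 \<le> C \<and> (\<forall>n. (\<integral>w. mm n w powr (-j) \<partial>M) \<le> C)"
proof -
  obtain C1 where C1: "\<And>n. (\<integral>w. R1 n w powr j \<partial>M) \<le> C1" using R1_moment[OF j] by blast
  obtain C2 where C2: "\<And>n. (\<integral>w. R2 n w powr j \<partial>M) \<le> C2" using R2_moment[OF j] by blast
  have "(\<integral>w. mm n w powr (-j) \<partial>M) \<le> C1 + C2" for n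
  proof -
    have "(\<integral>w. mm n w powr (-j) \<partial>M) \<le> (\<integral>w. R1 n w powr j + R2 n w powr j \<partial>M)"
      by (rule integral_mono[OF mm_int[OF j] Bochner_Integration.integrable_add[OF R_int[OF j]]])
        (use mm_pow_le j in auto)
    also have "\<dots> = (\<integral>w. R1 n w powr j \<partial>M) + (\<integral>w. R2 n w powr j \<partial>M)"
      by (rule Bochner_Integration.integral_add[OF R_int[OF j]])
    finally show ?thesis using C1[of n] C2[of n] by linarith
  qed
  moreover have "0 \<le> C1 + C2"
  proof -
    have "0 \<le> (\<integral>w. mm 0 w powr (-j) \<partial>M)" by (rule Bochner_Integration.integral_nonneg) auto
    with \<open>(\<integral>w. mm 0 w powr (-j) \<partial>M) \<le> C1 + C2\<close> show ?thesis by linarith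
  qed
  ultimately show ?thesis by blast
qed

lemma mmT_int: assumes j: "0 < j" shows "integrable M (\<lambda>w. mm n w * T n w powr (-j-1))"
proof (rule intb[where B="y0 powr (-j-1)"])
  fix w assume w: "w \<in> space M"
  have m: "0 < mm n w" "mm n w \<le> 1" using mm_pos[OF w] by auto
  have t: "T n w powr (-j-1) \<le> y0 powr (-j-1)"
    by (rule powr_mono2') (use pos[OF w] y0_pos j in auto)
  have "mm n w * T n w powr (-j-1) \<le> 1 * y0 powr (-j-1)"
    by (rule mult_mono) (use m t in auto)
  moreover have "0 \<le> mm n w * T n w powr (-j-1)" using m by simp
  ultimately show "\<bar>mm n w * T n w powr (-j-1)\<bar> \<le> y0 powr (-j-1)" by simp
qed measurable

lemma Tpow_int: assumes j: "0 < j" shows "integrable M (\<lambda>w. T n w powr (-j))"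
proof (rule intb[where B="y0 powr (-j)"])
  fix w assume w: "w \<in> space M"
  show "\<bar>T n w powr (-j)\<bar> \<le> y0 powr (-j)" using Tpow_bnd[OF w j, of n] by simp
qed measurable

lemma main_J:
  fixes J :: nat assumes J: "1 \<le> J"
  shows "\<exists>A. 0 \<le> A \<and> (\<forall>n. (\<integral>w. T n w powr (- real J) \<partial>M) \<le> A * (real n + 1) powr (- real J))"
proof -
  define j where "j = real J"
  have j: "0 < j" using J by (simp add: j_def)
  obtain C where C: "0 \<le> C" "\<And>n. (\<integral>w. mm n w powr (-j) \<partial>M) \<le> C" using mm_moment[OF j] by blast
  define x where "x n = (\<integral>w. T n w powr (-j) \<partial>M)" for n
  define e where "e n = (\<integral>w. mm n w * T n w powr (-j-1) \<partial>M)" for n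
  have "0 < 1 + a / y0" using ab y0_pos by (simp add: add_pos_nonneg)
  then have c: "0 < c1 j" unfolding c1_def using ab j by simp
  have x0: "0 \<le> x n" for n unfolding x_def by (rule Bochner_Integration.integral_nonneg) auto
  have e0: "0 \<le> e n" for n unfolding e_def
  proof (rule Bochner_Integration.integral_nonneg)
    fix w assume w: "w \<in> space M"
    then show "0 \<le> mm n w * T n w powr (-j-1)" using mm_pos[OF w, of n] by simp
  qed
  have rec: "x (Suc n) \<le> x n - c1 j * e n" for n unfolding x_def e_def by (rule step[OF j])
  have spl: "x n \<le> l * e n + l powr (- real J) * C" if l: "0 < l" for n l
  proof -
    have pw: "T n w powr (-j) \<le> l * (mm n w * T n w powr (-j-1)) + l powr (-j) * mm n w powr (-j)"
      if w: "w \<in> space M" for w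
    proof -
      have "T n w powr (-j) \<le> l * mm n w * T n w powr (-j-1) + (l * mm n w) powr (-j)"
        by (rule split_bound) (use pos[OF w] mm_pos[OF w] l j in auto)
      then show ?thesis using l mm_pos[OF w, of n] by (simp add: powr_mult mult.assoc)
    qed
    have "x n \<le> (\<integral>w. l * (mm n w * T n w powr (-j-1)) + l powr (-j) * mm n w powr (-j) \<partial>M)"
      unfolding x_def
      by (rule integral_mono[OF Tpow_int[OF j] Bochner_Integration.integrable_add[OF
            integrable_mult_right[OF mmT_int[OF j]] integrable_mult_right[OF mm_int[OF j]]]])
        (use pw in auto)
    also have "\<dots> = l * e n + l powr (-j) * (\<integral>w. mm n w powr (-j) \<partial>M)"
      unfolding e_def
      by (subst Bochner_Integration.integral_add[OF integrable_mult_right[OF mmT_int[OF j]] integrable_mult_right[OF mm_int[OF j]]])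
        simp
    also have "\<dots> \<le> l * e n + l powr (-j) * C"
      using C(2)[of n] by (intro add_left_mono mult_left_mono) auto
    finally show ?thesis by (simp add: j_def)
  qed
  obtain A where A: "\<And>n. x n \<le> A * (real n + 1) powr (- real J)"
    using seq_decay[of J "c1 j" C x e, OF J c C(1) x0 e0 rec spl] by blast
  have "0 \<le> A" using A[of 0] x0[of 0] by simp
  then show ?thesis using A unfolding x_def j_def by blast
qed

end


context arru begin

lemma final: "\<forall>j::real>0. (SUP n\<in>{1::nat..}. \<integral>\<^sup>+ w. ennreal
            ((real n / arru_Ytot u xi1 xi2 U r1 r2 y10 y20 n w) powr j) \<partial>M) < \<infinity>"
proof (intro allI impI)
  fix j :: real assume j: "0 < j"
  define J where "J = nat \<lceil>j\<rceil>"
  have "0 < \<lceil>j\<rceil>" using j by simp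
  then have J1: "1 \<le> J" unfolding J_def by linarith
  have jJ: "j \<le> real J" using j by (simp add: J_def)
  obtain A where A0: "0 \<le> A" and A: "\<And>n. (\<integral>w. T n w powr (- real J) \<partial>M) \<le> A * (real n + 1) powr (- real J)"
    using main_J[OF J1] by blast
  have Jp: "0 < real J" using J1 by simp
  have bnd: "(\<integral>\<^sup>+ w. ennreal ((real n / arru_Ytot u xi1 xi2 U r1 r2 y10 y20 n w) powr j) \<partial>M) \<le> ennreal (1 + A)" for n
  proof -
    have pw: "(real n / T n w) powr j \<le> 1 + real n powr real J * T n w powr (- real J)" if w: "w \<in> space M" for w
    proof -
      have "(real n / T n w) powr j \<le> 1 + (real n / T n w) powr real J"
        using pos[OF w, of n] j jJ by (intro powr_le_1_plus) auto
      also have "(real n / T n w) powr real J = real n powr real J * T n w powr (- real J)"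
      proof -
        have "(real n / T n w) powr real J = real n powr real J / T n w powr real J"
          using pos[OF w, of n] by (simp add: powr_divide)
        then show ?thesis by (simp add: powr_minus divide_inverse)
      qed
      finally show ?thesis .
    qed
    have iT: "integrable M (\<lambda>w. 1 + real n powr real J * T n w powr (- real J))"
      by (intro Bochner_Integration.integrable_add P.integrable_const integrable_mult_right Tpow_int Jp)
    have "(\<integral>\<^sup>+ w. ennreal ((real n / arru_Ytot u xi1 xi2 U r1 r2 y10 y20 n w) powr j) \<partial>M)
        \<le> (\<integral>\<^sup>+ w. ennreal (1 + real n powr real J * T n w powr (- real J)) \<partial>M)"
    proof (rule nn_integral_mono)
      fix w assume w: "w \<in> space M"
      show "ennreal ((real n / arru_Ytot u xi1 xi2 U r1 r2 y10 y20 n w) powr j)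
          \<le> ennreal (1 + real n powr real J * T n w powr (- real J))"
        unfolding Tot_eq by (rule ennreal_leI[OF pw[OF w]])
    qed
    also have "\<dots> = ennreal (\<integral>w. 1 + real n powr real J * T n w powr (- real J) \<partial>M)"
      by (rule nn_integral_eq_integral[OF iT]) auto
    also have "(\<integral>w. 1 + real n powr real J * T n w powr (- real J) \<partial>M)
        = 1 + real n powr real J * (\<integral>w. T n w powr (- real J) \<partial>M)"
      by (subst Bochner_Integration.integral_add[OF P.integrable_const integrable_mult_right[OF Tpow_int[OF Jp]]])
        (simp add: P.prob_space)
    also have "\<dots> \<le> 1 + real n powr real J * (A * (real n + 1) powr (- real J))"
      using A[of n] by (intro add_left_mono mult_left_mono) auto
    also have "\<dots> \<le> 1 + A"
    proof -
      have "real n powr real J \<le> (real n + 1) powr real J" by (intro powr_mono2) auto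
      then have "real n powr real J * (real n + 1) powr (- real J) \<le> (real n + 1) powr real J * (real n + 1) powr (- real J)"
        by (intro mult_right_mono) auto
      also have "\<dots> = 1" by (simp add: powr_add[symmetric])
      finally have h: "real n powr real J * (real n + 1) powr (- real J) \<le> 1" .
      have "A * (real n powr real J * (real n + 1) powr (- real J)) \<le> A * 1"
        by (rule mult_left_mono[OF h A0])
      then have "real n powr real J * (A * (real n + 1) powr (- real J)) \<le> A"
        by (simp add: mult.left_commute)
      then show ?thesis by simp
    qed
    finally show ?thesis by (simp add: ennreal_leI)
  qed
  have "(SUP n\<in>{1::nat..}. \<integral>\<^sup>+ w. ennreal ((real n / arru_Ytot u xi1 xi2 U r1 r2 y10 y20 n w) powr j) \<partial>M) \<le> ennreal (1 + A)"
    by (rule SUP_least) (rule bnd)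
  also have "\<dots> < \<infinity>" by simp
  finally show "(SUP n\<in>{1::nat..}. \<integral>\<^sup>+ w. ennreal ((real n / arru_Ytot u xi1 xi2 U r1 r2 y10 y20 n w) powr j) \<partial>M) < \<infinity>" .
qed

end

theorem theorem3p1:
  fixes M :: "'w measure" and S :: "'s measure"
    and mu1 mu2 :: "'s measure" and u :: "'s \<Rightarrow> real" and a b :: real
    and xi1 xi2 :: "nat \<Rightarrow> 'w \<Rightarrow> 's" and U :: "nat \<Rightarrow> 'w \<Rightarrow> real"
    and y10 y20 :: real and r1 r2 :: "nat \<Rightarrow> 'w \<Rightarrow> real" and rho1 rho2 :: real
  assumes M: "prob_space M"
    and ab: "0 < a" "a \<le> b"
    and u_meas: "u \<in> borel_measurable S"
    and u_range: "\<forall>s\<in>space S. a \<le> u s \<and> u s \<le> b"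
    and mu1: "prob_space mu1" "sets mu1 = sets S"
    and mu2: "prob_space mu2" "sets mu2 = sets S"
    and xi1_meas: "\<forall>n\<ge>1. xi1 n \<in> measurable M S"
    and xi2_meas: "\<forall>n\<ge>1. xi2 n \<in> measurable M S"
    and U_meas: "\<forall>n\<ge>1. U n \<in> borel_measurable M"
    and xi1_distr: "\<forall>n\<ge>1. distr M S (xi1 n) = mu1"
    and xi2_distr: "\<forall>n\<ge>1. distr M S (xi2 n) = mu2"
    and U_distr: "\<forall>n\<ge>1. distr M lborel (U n) = uniform_measure lborel {0<..<1::real}"
    and indep: "prob_space.indep_sets M
        (\<lambda>(k, n). if k = (0::nat) then {xi1 n -` A \<inter> space M | A. A \<in> sets S}
                  else if k = 1 then {xi2 n -` A \<inter> space M | A. A \<in> sets S}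
                  else {U n -` A \<inter> space M | A. A \<in> sets (borel :: real measure)})
        ({0, 1, 2} \<times> {1..})"
    and y0: "0 < y10" "0 < y20"
    and r_meas: "\<forall>n. r1 n \<in> borel_measurable (arru_F M S u xi1 xi2 U r1 r2 y10 y20 n)
                   \<and> r2 n \<in> borel_measurable (arru_F M S u xi1 xi2 U r1 r2 y10 y20 n)"
    and r_range: "\<forall>n. \<forall>w\<in>space M. 0 < r1 n w \<and> r1 n w < 1 \<and> 0 < r2 n w \<and> r2 n w < 1"
    and r_order: "\<forall>n. AE w in M. r2 n w \<le> r1 n w"
    and rho: "0 < rho2" "rho2 \<le> rho1" "rho1 < 1"
    and m_neq: "integral\<^sup>L mu1 u \<noteq> integral\<^sup>L mu2 u"
    and condE1: "\<forall>\<epsilon>>0. \<exists>c1>0. \<exists>N. \<forall>n\<ge>N.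
        measure M {w \<in> space M. \<bar>r1 n w - rho1\<bar> > \<epsilon>} \<le> c1 * exp (- real n * \<epsilon>\<^sup>2)"
    and condE2: "\<forall>\<epsilon>>0. \<exists>c1>0. \<exists>N. \<forall>n\<ge>N.
        measure M {w \<in> space M. \<bar>r2 n w - rho2\<bar> > \<epsilon>} \<le> c1 * exp (- real n * \<epsilon>\<^sup>2)"
  shows "\<forall>j::real>0. (SUP n\<in>{1::nat..}. \<integral>\<^sup>+ w. ennreal
            ((real n / arru_Ytot u xi1 xi2 U r1 r2 y10 y20 n w) powr j) \<partial>M) < \<infinity>"
  proof -
  interpret arru M S u a b xi1 xi2 U y10 y20 r1 r2 rho1 rho2
    unfolding arru_def using assms by (intro conjI) assumption+
  show ?thesis by (rule final)
qed

end
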